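(* Let $L_0+\lambda L_1\in\mathbb{C}[\lambda]^{m\times n}$ be a matrix pencil. Suppose $U\in\mathbb{C}^{m\times m}$, $V\in\mathbb{C}^{n\times n}$ are unitary and \[ U^*(L_0+\lambda L_1)V=\begin{bmatrix}\tilde A & X\\ 0 & A_r\end{bmatrix}+\lambda\begin{bmatrix}\tilde E & Y\\ 0 & E_r\end{bmatrix}, \] where $A_r$ has full column rank and $\tilde A+\lambda\tilde E$ is block upper triangular with block rows of sizes $s_1,\dots,s_k$ and block columns of sizes $t_1,\dots,t_k$ (blocks $A_{i,j},E_{i,j}\in\mathbb{C}^{s_i\times t_j}$), with zero block-diagonal blocks in $\tilde A$, each $E_{i,i}$ of full row rank $s_i$ and each $A_{i,i+1}$ of full column rank $t_{i+1}$. Let $U_d$ and $V_d$ be unitary block-diagonal matrices, conformal with this block structure (and equal to the identity on the rows/columns outside $\tilde A+\lambda\tilde E$), such that, with $\hat U=UU_d$ and $\hat V=VV_d$ in place of $U,V$, the stairs take the form $A_{i,i+1}=\begin{bmatrix}\hat A_{i,i+1}\\0\end{bmatrix}$, $E_{i,i}=\begin{bmatrix}0&\hat E_{i,i}\end{bmatrix}$ with $\hat A_{i,i+1},\hat E_{i,i}$ square, upper triangular and invertible. Let $S$ and $T$ be unit upper triangular matrices bidiagonalizing the resulting leading subpencil $\tilde A+\lambda\tilde E$ (i.e. eliminating all blocks except the $E_{i,i}$ and $A_{i,i+1}$), extended by identity blocks to size $m\times m$ and $n\times n$. Define $\hat S:=UU_dS$ and $\hat T:=VV_dT$, $\sigma_i:=\sum_{j=1}^i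 s_j$, $\tau_i:=\sum_{j=1}^i t_j$. Define the Wong sequences $\mathcal{U}_0=\{0\}\subseteq\mathbb{C}^m$ and, for $i=1,\dots,k$, $\mathcal{V}_i=L_0^{\leftarrow}\mathcal{U}_{i-1}\subseteq\mathbb{C}^n$ and $\mathcal{U}_i=L_1\mathcal{V}_i\subseteq\mathbb{C}^m$. Then for $i=1,\dots,k$, \[ \mathcal{U}_i=\operatorname{im}\hat S\begin{bmatrix}I_{\sigma_i}\\0\end{bmatrix},\qquad \mathcal{V}_i=\operatorname{im}\hat T\begin{bmatrix}I_{\tau_i}\\0\end{bmatrix}, \] i.e. the (in general non-orthonormal) leading block columns of $\hat S$ and $\hat T$ span the nested Wong spaces.
   Context: For a matrix $M$ and subspaces $\mathcal{V},\mathcal{U}$: $M\mathcal{V}:=\{Mv: v\in\mathcal{V}\}$ is the image and $M^{\leftarrow}\mathcal{U}:=\{v: Mv\in\mathcal{U}\}$ is the preimage. A unit upper triangular matrix is upper triangular with ones on the diagonal. It is known (and used here) that for such a staircase form the Wong spaces satisfy $\mathcal{U}_i=\operatorname{im}U\begin{bmatrix}I_{\sigma_i}\\0\end{bmatrix}$ and $\mathcal{V}_i=\operatorname{im}V\begin{bmatrix}I_{\tau_i}\\0\end{bmatrix}$. *)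

theory Defs
  imports "Jordan_Normal_Form.DL_Rank" "Jordan_Normal_Form.Schur_Decomposition"
begin

text \<open>Complex matrices are Jordan_Normal_Form matrices of type complex mat
  (dimensions stored in the value).  U^* is mat_adjoint U.\<close>

definition unitary_mat :: "complex mat \<Rightarrow> nat \<Rightarrow> bool" where
  "unitary_mat U n \<longleftrightarrow> U \<in> carrier_mat n n \<and> mat_adjoint U * U = 1\<^sub>m n"

definition unit_upper_triangular :: "complex mat \<Rightarrow> bool" where
  "unit_upper_triangular A \<longleftrightarrow> dim_row A = dim_col A \<and> upper_triangular A
     \<and> (\<forall>i < dim_row A. A $$ (i,i) = 1)"

definition mrank :: "complex mat \<Rightarrow> nat" where
  "mrank A = vec_space.rank (dim_row A) (A :: complex mat)"

definition full_col_rank :: "complex mat \<Rightarrow> bool" where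
  "full_col_rank A \<longleftrightarrow> mrank A = dim_col A"

definition full_row_rank :: "complex mat \<Rightarrow> bool" where
  "full_row_rank A \<longleftrightarrow> mrank A = dim_row A"

definition psum :: "(nat \<Rightarrow> nat) \<Rightarrow> nat \<Rightarrow> nat" where
  "psum s i = (\<Sum>j = 1..i. s j)"

definition sub_block :: "'a mat \<Rightarrow> nat \<Rightarrow> nat \<Rightarrow> nat \<Rightarrow> nat \<Rightarrow> 'a mat" where
  "sub_block M r0 c0 r c = mat r c (\<lambda>(i,j). M $$ (r0 + i, c0 + j))"

text \<open>block (i,j) (1-based) for block row sizes s and block column sizes t\<close>
definition blk :: "'a mat \<Rightarrow> (nat \<Rightarrow> nat) \<Rightarrow> (nat \<Rightarrow> nat) \<Rightarrow> nat \<Rightarrow> nat \<Rightarrow> 'a mat" where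
  "blk M s t i j = sub_block M (psum s (i - 1)) (psum t (j - 1)) (s i) (t j)"

definition lead_cols :: "complex mat \<Rightarrow> nat \<Rightarrow> complex mat" where
  "lead_cols M r = M * mat (dim_col M) r (\<lambda>(i,j). if i = j then 1 else 0)"

definition col_image :: "complex mat \<Rightarrow> complex vec set" where
  "col_image M = {M *\<^sub>v x | x. x \<in> carrier_vec (dim_col M)}"

fun wongU :: "complex mat \<Rightarrow> complex mat \<Rightarrow> nat \<Rightarrow> complex vec set" where
  "wongU L0 L1 0 = {0\<^sub>v (dim_row L0)}"
| "wongU L0 L1 (Suc i) =
     {L1 *\<^sub>v v | v. v \<in> carrier_vec (dim_col L0) \<and> L0 *\<^sub>v v \<in> wongU L0 L1 i}"

definition wongV :: "complex mat \<Rightarrow> complex mat \<Rightarrow> nat \<Rightarrow> complex vec set" where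
  "wongV L0 L1 i = {v \<in> carrier_vec (dim_col L0). L0 *\<^sub>v v \<in> wongU L0 L1 (i - 1)}"

end

theory Submission
  imports Defs
begin


lemma (in vec_space) rank_le_card_cols:
  assumes "A \<in> carrier_mat n nc"
  shows "rank A \<le> card (set (cols A))"
proof -
  obtain S where S: "maximal S (\<lambda>T. T \<subseteq> set (cols A) \<and> lin_indpt T)"
    using maximal_exists[of "(\<lambda>T. T \<subseteq> set (cols A) \<and> lin_indpt T)" "card (set (cols A))" "{}"]
    by (meson List.finite_set card_mono empty_iff empty_subsetI finite_lin_indpt2 rev_finite_subset)
  then have "card S \<le> card (set (cols A))" by (simp add: card_mono maximal_def)
  then show ?thesis using rank_card_indpt[OF assms S] by simp
qed

lemma full_col_rank_inj:
  assumes A: "A \<in> carrier_mat r c" and fr: "full_col_rank A"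
    and x: "x \<in> carrier_vec c" and z: "A *\<^sub>v x = 0\<^sub>v r"
  shows "x = 0\<^sub>v c"
proof -
  interpret vec_space "TYPE(complex)" r .
  have rk: "rank A = c" using fr A unfolding full_col_rank_def mrank_def by auto
  have dist: "distinct (cols A)"
  proof (rule ccontr)
    assume nd: "\<not> distinct (cols A)"
    have "card (set (cols A)) < length (cols A)"
      using nd card_distinct card_length le_neq_implies_less by blast
    then have "card (set (cols A)) < c" using A by simp
    with rank_le_card_cols[OF A] rk show False by simp
  qed
  have li: "lin_indpt (set (cols A))" using full_rank_lin_indpt[OF A rk dist] .
  show ?thesis
  proof (rule ccontr)
    assume "x \<noteq> 0\<^sub>v c"
    from lin_depI[OF A x this z dist] li show False by simp
  qed
qed

lemma full_row_rank_surj: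
  assumes A: "A \<in> carrier_mat r c" and fr: "full_row_rank A"
    and y: "y \<in> carrier_vec r"
  shows "\<exists>x \<in> carrier_vec c. A *\<^sub>v x = y"
proof -
  interpret vec_space "TYPE(complex)" r .
  have rk: "rank A = r" using fr A unfolding full_row_rank_def mrank_def by auto
  obtain S where S: "maximal S (\<lambda>T. T \<subseteq> set (cols A) \<and> lin_indpt T)"
    using maximal_exists[of "(\<lambda>T. T \<subseteq> set (cols A) \<and> lin_indpt T)" "card (set (cols A))" "{}"]
    by (meson List.finite_set card_mono empty_iff empty_subsetI finite_lin_indpt2 rev_finite_subset)
  have cS: "card S = r" using rank_card_indpt[OF A S] rk by simp
  have colsC: "set (cols A) \<subseteq> carrier_vec r" using A cols_dim by blast
  have SC: "S \<subseteq> carrier_vec r" "lin_indpt S" using S colsC unfolding maximal_def by auto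
  have fS: "finite S" using S unfolding maximal_def by (meson List.finite_set rev_finite_subset)
  have "basis S"
    by (rule dim_li_is_basis) (use fS SC cS dim_is_n in auto)
  then have "span S = carrier_vec r" unfolding basis_def by auto
  moreover have "span S \<subseteq> span (set (cols A))"
    using S unfolding maximal_def by (meson span_is_monotone)
  ultimately have "y \<in> span (set (cols A))" using y by auto
  then have "y \<in> span_list (cols A)" using span_list_as_span[OF colsC] by simp
  then obtain cf where "y = lincomb_list cf (cols A)" unfolding span_list_def by auto
  also have "\<dots> = mat_of_cols r (cols A) *\<^sub>v vec (length (cols A)) cf"
    by (rule lincomb_list_as_mat_mult) (use colsC in auto)
  also have "\<dots> = A *\<^sub>v vec c cf" using A mat_of_cols_cols[of A] by auto
  finally show ?thesis by auto
qed


lemma psum_0[simp]: "psum s 0 = 0" unfolding psum_def by simp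
lemma psum_Suc: "psum s (Suc i) = psum s i + s (Suc i)" unfolding psum_def by simp
lemma psum_mono: "i \<le> j \<Longrightarrow> psum s i \<le> psum s j"
  unfolding psum_def by (rule sum_mono2) auto

lemma psum_block_loc:
  assumes "l < psum s k"
  shows "\<exists>b. 1 \<le> b \<and> b \<le> k \<and> psum s (b - 1) \<le> l \<and> l < psum s b"
  using assms
proof (induction k)
  case 0 then show ?case by simp
next
  case (Suc k)
  show ?case
  proof (cases "l < psum s k")
    case True then show ?thesis using Suc.IH by (meson le_Suc_eq)
  next
    case False then show ?thesis using Suc.prems by (intro exI[of _ "Suc k"]) auto
  qed
qed

definition W :: "nat \<Rightarrow> nat \<Rightarrow> complex vec set" where
  "W d p = {x \<in> carrier_vec d. \<forall>j<d. p \<le> j \<longrightarrow> x $ j = 0}"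

lemma W_0: "W d 0 = {0\<^sub>v d}"
  unfolding W_def by (auto intro!: eq_vecI)

lemma W_mono: "p \<le> q \<Longrightarrow> W d p \<subseteq> W d q"
  unfolding W_def by auto

lemma sum_window:
  fixes f :: "nat \<Rightarrow> 'a::comm_monoid_add"
  assumes "a + l \<le> n" and "\<And>c. c < n \<Longrightarrow> \<not> (a \<le> c \<and> c < a + l) \<Longrightarrow> f c = 0"
  shows "(\<Sum>c\<in>{0..<n}. f c) = (\<Sum>c\<in>{0..<l}. f (a + c))"
proof -
  have "(\<Sum>c\<in>{0..<n}. f c) = (\<Sum>c\<in>{a..<a+l}. f c)"
    by (rule sum.mono_neutral_right) (use assms in auto)
  also have "\<dots> = (\<Sum>c\<in>{0..<l}. f (a + c))"
  proof -
    show ?thesis using sum.shift_bounds_nat_ivl[of f 0 a l] by (simp add: add.commute)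
  qed
  finally show ?thesis .
qed

lemma blk_carrier[simp]: "blk M s t i j \<in> carrier_mat (s i) (t j)"
  unfolding blk_def sub_block_def by simp

lemma blk_index:
  "a < s i \<Longrightarrow> b < t j \<Longrightarrow> blk M s t i j $$ (a, b) = M $$ (psum s (i - 1) + a, psum t (j - 1) + b)"
  unfolding blk_def sub_block_def by simp

lemma blk_zeroD:
  assumes "blk M s t i j = 0\<^sub>m (s i) (t j)"
    and "psum s (i - 1) \<le> r" "r < psum s (i - 1) + s i"
    and "psum t (j - 1) \<le> c" "c < psum t (j - 1) + t j"
  shows "M $$ (r, c) = 0"
proof -
  have "blk M s t i j $$ (r - psum s (i - 1), c - psum t (j - 1)) = 0"
    using assms by simp
  then show ?thesis using assms blk_index[of "r - psum s (i - 1)" s i "c - psum t (j - 1)" t j M] by simp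
qed

lemma sub_block_zeroD:
  assumes "sub_block M r0 c0 r c = 0\<^sub>m r c" "r0 \<le> i" "i < r0 + r" "c0 \<le> j" "j < c0 + c"
  shows "M $$ (i, j) = 0"
proof -
  have "sub_block M r0 c0 r c $$ (i - r0, j - c0) = 0" using assms by simp
  then show ?thesis using assms(2-5) unfolding sub_block_def by simp
qed

lemma psum_pred: "1 \<le> b \<Longrightarrow> psum s b = psum s (b - 1) + s b"
  by (cases b) (auto simp: psum_Suc)

lemma lower_zero:
  assumes pm: "psum s k \<le> m" and qn: "psum t k \<le> n"
    and low: "sub_block M (psum s k) 0 (m - psum s k) (psum t k) = 0\<^sub>m (m - psum s k) (psum t k)"
    and tri: "\<And>i j. i \<in> {1..k} \<Longrightarrow> j \<in> {1..k} \<Longrightarrow> j < i \<Longrightarrow> blk M s t i j = 0\<^sub>m (s i) (t j)"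
    and r: "r < m" and c: "c < psum t a" and a: "a \<le> k" and ra: "psum s a \<le> r"
  shows "M $$ (r, c) = 0"
proof -
  have "c < psum t k" using c psum_mono[OF a, of t] by simp
  then obtain a' where a': "1 \<le> a'" "a' \<le> k" "psum t (a' - 1) \<le> c" "c < psum t a'"
    using psum_block_loc by blast
  have "a' \<le> a"
  proof (rule ccontr)
    assume "\<not> a' \<le> a" then have "a \<le> a' - 1" by simp
    from psum_mono[OF this, of t] a' c show False by simp
  qed
  show ?thesis
  proof (cases "psum s k \<le> r")
    case True
    show ?thesis by (rule sub_block_zeroD[OF low]) (use True r \<open>c < psum t k\<close> in auto)
  next
    case False
    then obtain b where b: "1 \<le> b" "b \<le> k" "psum s (b - 1) \<le> r" "r < psum s b"
      using psum_block_loc[of r s k] by auto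
    have "a < b"
    proof (rule ccontr)
      assume "\<not> a < b" then have "b \<le> a" by simp
      from psum_mono[OF this, of s] b ra show False by simp
    qed
    show ?thesis
      by (rule blk_zeroD[OF tri[of b a']]) (use a' b \<open>a' \<le> a\<close> \<open>a < b\<close> psum_pred[of b s] psum_pred[of a' t] in auto)
  qed
qed

lemma lower_zero_diag:
  assumes pm: "psum s k \<le> m" and qn: "psum t k \<le> n"
    and low: "sub_block M (psum s k) 0 (m - psum s k) (psum t k) = 0\<^sub>m (m - psum s k) (psum t k)"
    and tri: "\<And>i j. i \<in> {1..k} \<Longrightarrow> j \<in> {1..k} \<Longrightarrow> j < i \<Longrightarrow> blk M s t i j = 0\<^sub>m (s i) (t j)"
    and diag: "\<And>i. i \<in> {1..k} \<Longrightarrow> blk M s t i i = 0\<^sub>m (s i) (t i)"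
    and r: "r < m" and c: "c < psum t a" and a: "a \<le> k" "1 \<le> a" and ra: "psum s (a - 1) \<le> r"
  shows "M $$ (r, c) = 0"
proof -
  have "c < psum t k" using c psum_mono[OF a(1), of t] by simp
  then obtain a' where a': "1 \<le> a'" "a' \<le> k" "psum t (a' - 1) \<le> c" "c < psum t a'"
    using psum_block_loc by blast
  have "a' \<le> a"
  proof (rule ccontr)
    assume "\<not> a' \<le> a" then have "a \<le> a' - 1" by simp
    from psum_mono[OF this, of t] a' c show False by simp
  qed
  show ?thesis
  proof (cases "psum s k \<le> r")
    case True
    show ?thesis by (rule sub_block_zeroD[OF low]) (use True r \<open>c < psum t k\<close> in auto)
  next
    case False
    then obtain b where b: "1 \<le> b" "b \<le> k" "psum s (b - 1) \<le> r" "r < psum s b"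
      using psum_block_loc[of r s k] by auto
    have "a \<le> b"
    proof (rule ccontr)
      assume "\<not> a \<le> b" then have "b \<le> a - 1" by simp
      from psum_mono[OF this, of s] b ra show False by simp
    qed
    show ?thesis
    proof (cases "a' < b")
      case True
      show ?thesis
        by (rule blk_zeroD[OF tri[of b a']]) (use a' b True psum_pred[of b s] psum_pred[of a' t] in auto)
    next
      case False
      then have "a' = b" using \<open>a' \<le> a\<close> \<open>a \<le> b\<close> by simp
      show ?thesis
        by (rule blk_zeroD[OF diag[of b]]) (use a' b \<open>a' = b\<close> psum_pred[of b s] psum_pred[of b t] in auto)
    qed
  qed
qed



lemma mulvec_index_sum:
  assumes "M \<in> carrier_mat d e" "x \<in> carrier_vec e" "j < d"
  shows "(M *\<^sub>v x) $ j = (\<Sum>c\<in>{0..<e}. M $$ (j, c) * x $ c)"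
  using assms by (simp add: scalar_prod_def)

lemma mv_W:
  assumes M: "M \<in> carrier_mat d e"
    and Z: "\<And>r c. r < d \<Longrightarrow> c < e \<Longrightarrow> c < p \<Longrightarrow> q \<le> r \<Longrightarrow> M $$ (r, c) = 0"
    and x: "x \<in> W e p"
  shows "M *\<^sub>v x \<in> W d q"
proof -
  have xc: "x \<in> carrier_vec e" using x unfolding W_def by auto
  have "(M *\<^sub>v x) $ j = 0" if "j < d" "q \<le> j" for j
  proof -
    have "(M *\<^sub>v x) $ j = (\<Sum>c\<in>{0..<e}. M $$ (j, c) * x $ c)" using mulvec_index_sum[OF M xc that(1)] .
    also have "\<dots> = 0"
    proof (rule sum.neutral, intro ballI)
      fix c assume "c \<in> {0..<e}"
      then show "M $$ (j, c) * x $ c = 0"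
        using Z[of j c] x that unfolding W_def by (cases "c < p") auto
    qed
    finally show ?thesis .
  qed
  moreover have "M *\<^sub>v x \<in> carrier_vec d" using M by (intro carrier_vecI) simp
  ultimately show ?thesis unfolding W_def by auto
qed

lemma sq_surj:
  assumes M: "M \<in> carrier_mat d d" and pd: "p \<le> d"
    and Z: "\<And>r c. r < d \<Longrightarrow> c < p \<Longrightarrow> p \<le> r \<Longrightarrow> M $$ (r, c) = 0"
    and N: "N \<in> carrier_mat p p" and NM: "N * sub_block M 0 0 p p = 1\<^sub>m p"
  shows "(\<lambda>x. M *\<^sub>v x) ` W d p = W d p"
proof
  show "(\<lambda>x. M *\<^sub>v x) ` W d p \<subseteq> W d p"
    using mv_W[OF M, of p p] Z by blast
  show "W d p \<subseteq> (\<lambda>x. M *\<^sub>v x) ` W d p"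
  proof
    fix y assume y: "y \<in> W d p"
    define Ms where "Ms = sub_block M 0 0 p p"
    have Ms: "Ms \<in> carrier_mat p p" unfolding Ms_def sub_block_def by simp
    have MsN: "Ms * N = 1\<^sub>m p" using mat_mult_left_right_inverse[OF N Ms] NM unfolding Ms_def by simp
    define y' where "y' = vec p (\<lambda>i. y $ i)"
    define x' where "x' = N *\<^sub>v y'"
    define x where "x = vec d (\<lambda>i. if i < p then x' $ i else 0)"
    have x'c: "x' \<in> carrier_vec p" unfolding x'_def using N by (intro carrier_vecI) simp
    have xW: "x \<in> W d p" unfolding W_def x_def by auto
    have yc: "y \<in> carrier_vec d" using y unfolding W_def by auto
    have "M *\<^sub>v x = y"
    proof (rule eq_vecI)
      show "dim_vec (M *\<^sub>v x) = dim_vec y" using M yc by simp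
      fix i assume "i < dim_vec y"
      then have i: "i < d" using yc by simp
      show "(M *\<^sub>v x) $ i = y $ i"
      proof (cases "i < p")
        case True
        have "(M *\<^sub>v x) $ i = (\<Sum>c\<in>{0..<d}. M $$ (i, c) * x $ c)"
          using mulvec_index_sum[OF M _ i] unfolding x_def by simp
        also have "\<dots> = (\<Sum>c\<in>{0..<p}. M $$ (i, 0 + c) * x $ (0 + c))"
          by (rule sum_window) (use pd in \<open>auto simp: x_def\<close>)
        also have "\<dots> = (\<Sum>c\<in>{0..<p}. Ms $$ (i, c) * x' $ c)"
          by (rule sum.cong) (use True pd in \<open>auto simp: x_def Ms_def sub_block_def\<close>)
        also have "\<dots> = (Ms *\<^sub>v x') $ i" using mulvec_index_sum[OF Ms x'c True] by simp
        also have "\<dots> = ((Ms * N) *\<^sub>v y') $ i" unfolding x'_def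
          using Ms N by (subst assoc_mult_mat_vec[of _ p p _ p]) (auto simp: y'_def)
        also have "\<dots> = y $ i" using MsN True by (simp add: y'_def)
        finally show ?thesis .
      next
        case False
        have "M *\<^sub>v x \<in> W d p" using mv_W[OF M, of p p x] Z xW by blast
        then show ?thesis using False i y unfolding W_def by auto
      qed
    qed
    then show "y \<in> (\<lambda>x. M *\<^sub>v x) ` W d p" using xW by blast
  qed
qed

lemma col_image_lead:
  assumes M: "M \<in> carrier_mat d d" and pd: "p \<le> d"
  shows "col_image (lead_cols M p) = (\<lambda>x. M *\<^sub>v x) ` W d p"
proof -
  define P :: "complex mat" where "P = mat d p (\<lambda>(i,j). if i = j then 1 else 0)"
  have P: "P \<in> carrier_mat d p" unfolding P_def by simp
  have Pv: "P *\<^sub>v x = vec d (\<lambda>i. if i < p then x $ i else 0)" if x: "x \<in> carrier_vec p" for x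
  proof (rule eq_vecI)
    show "dim_vec (P *\<^sub>v x) = dim_vec (vec d (\<lambda>i. if i < p then x $ i else 0))" using P by simp
    fix i assume "i < dim_vec (vec d (\<lambda>i. if i < p then x $ i else 0))"
    then have i: "i < d" by simp
    have "(P *\<^sub>v x) $ i = (\<Sum>c\<in>{0..<p}. (if i = c then 1 else 0) * x $ c)"
      using mulvec_index_sum[OF P x i] i unfolding P_def by simp
    also have "\<dots> = (\<Sum>c\<in>{0..<p}. if c = i then x $ i else 0)"
      by (rule sum.cong) auto
    also have "\<dots> = (if i < p then x $ i else 0)"
      by (simp add: sum.delta)
    finally show "(P *\<^sub>v x) $ i = vec d (\<lambda>i. if i < p then x $ i else 0) $ i" using i by simp
  qed
  have img: "(\<lambda>x. P *\<^sub>v x) ` carrier_vec p = W d p"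
  proof
    show "(\<lambda>x. P *\<^sub>v x) ` carrier_vec p \<subseteq> W d p" using Pv unfolding W_def by auto
    show "W d p \<subseteq> (\<lambda>x. P *\<^sub>v x) ` carrier_vec p"
    proof
      fix w assume w: "w \<in> W d p"
      have "P *\<^sub>v vec p (\<lambda>i. w $ i) = w"
        using Pv[of "vec p (\<lambda>i. w $ i)"] w pd unfolding W_def by (auto intro!: eq_vecI)
      then show "w \<in> (\<lambda>x. P *\<^sub>v x) ` carrier_vec p" by (metis image_eqI vec_carrier)
    qed
  qed
  have "col_image (lead_cols M p) = {M *\<^sub>v (P *\<^sub>v x) | x. x \<in> carrier_vec p}"
  proof -
    have "lead_cols M p = M * P" unfolding lead_cols_def P_def using M by simp
    then show ?thesis unfolding col_image_def using M P by (auto simp: assoc_mult_mat_vec) (metis assoc_mult_mat_vec)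
  qed
  also have "\<dots> = (\<lambda>x. M *\<^sub>v x) ` ((\<lambda>x. P *\<^sub>v x) ` carrier_vec p)" by auto
  finally show ?thesis unfolding img .
qed

lemma adjoint_carrier: "U \<in> carrier_mat d d \<Longrightarrow> mat_adjoint U \<in> carrier_mat d d"
  unfolding mat_adjoint_def by auto

lemma unitary_right: "unitary_mat U d \<Longrightarrow> U * mat_adjoint U = 1\<^sub>m d"
  unfolding unitary_mat_def using mat_mult_left_right_inverse adjoint_carrier by blast



lemma kerA:
  assumes A: "A \<in> carrier_mat m n" and pm: "psum s k \<le> m" and qn: "psum t k \<le> n"
    and low: "sub_block A (psum s k) 0 (m - psum s k) (psum t k) = 0\<^sub>m (m - psum s k) (psum t k)"
    and Ar: "full_col_rank (sub_block A (psum s k) (psum t k) (m - psum s k) (n - psum t k))"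
    and tri: "\<And>i j. i \<in> {1..k} \<Longrightarrow> j \<in> {1..k} \<Longrightarrow> j < i \<Longrightarrow> blk A s t i j = 0\<^sub>m (s i) (t j)"
    and diag: "\<And>i. i \<in> {1..k} \<Longrightarrow> blk A s t i i = 0\<^sub>m (s i) (t i)"
    and sup: "\<And>i. i \<in> {1..<k} \<Longrightarrow> full_col_rank (blk A s t i (i + 1))"
    and i: "1 \<le> i" "i \<le> k" and x: "x \<in> carrier_vec n" and Ax: "A *\<^sub>v x \<in> W m (psum s (i - 1))"
  shows "x \<in> W n (psum t i)"
proof -
  note LZ = lower_zero_diag[OF pm qn low tri diag]
  have Axz: "(A *\<^sub>v x) $ r = 0" if "r < m" "psum s (i - 1) \<le> r" for r
    using Ax that unfolding W_def by auto
  have step0: "x $ c = 0" if c: "psum t k \<le> c" "c < n" for c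
  proof -
    define Ar where "Ar = sub_block A (psum s k) (psum t k) (m - psum s k) (n - psum t k)"
    have Arc: "Ar \<in> carrier_mat (m - psum s k) (n - psum t k)" unfolding Ar_def sub_block_def by simp
    define x2 where "x2 = vec (n - psum t k) (\<lambda>j. x $ (psum t k + j))"
    have x2c: "x2 \<in> carrier_vec (n - psum t k)" unfolding x2_def by simp
    have "Ar *\<^sub>v x2 = 0\<^sub>v (m - psum s k)"
    proof (rule eq_vecI)
      show "dim_vec (Ar *\<^sub>v x2) = dim_vec (0\<^sub>v (m - psum s k))" using Arc by simp
      fix r' assume "r' < dim_vec (0\<^sub>v (m - psum s k))"
      then have r': "r' < m - psum s k" by simp
      have "(Ar *\<^sub>v x2) $ r' = (\<Sum>j\<in>{0..<n - psum t k}. A $$ (psum s k + r', psum t k + j) * x $ (psum t k + j))"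
        using mulvec_index_sum[OF Arc x2c r'] r' unfolding Ar_def x2_def sub_block_def by simp
      also have "\<dots> = (\<Sum>c\<in>{0..<n}. A $$ (psum s k + r', c) * x $ c)"
      proof (rule sum_window[symmetric])
        show "psum t k + (n - psum t k) \<le> n" using qn by simp
        fix c assume "c < n" "\<not> (psum t k \<le> c \<and> c < psum t k + (n - psum t k))"
        then have "c < psum t k" by simp
        then show "A $$ (psum s k + r', c) * x $ c = 0"
          using LZ[of "psum s k + r'" c k] r' i psum_mono[of "k - 1" k s] by simp
      qed
      also have "\<dots> = (A *\<^sub>v x) $ (psum s k + r')"
        using mulvec_index_sum[OF A x, of "psum s k + r'"] r' by simp
      also have "\<dots> = 0"
      proof -
        have "psum s (i - 1) \<le> psum s k" by (rule psum_mono) (use i in simp)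
        then show ?thesis using Axz[of "psum s k + r'"] r' pm by simp
      qed
      finally show "(Ar *\<^sub>v x2) $ r' = 0\<^sub>v (m - psum s k) $ r'" using r' by simp
    qed
    then have "x2 = 0\<^sub>v (n - psum t k)"
      using full_col_rank_inj[OF Arc _ x2c] Ar unfolding Ar_def by blast
    then have "x2 $ (c - psum t k) = 0" using c by simp
    then show ?thesis using c unfolding x2_def by (simp, metis le_add_diff_inverse)
  qed
  have ind: "\<forall>c. psum t (k - d) \<le> c \<longrightarrow> c < n \<longrightarrow> x $ c = 0" if "d \<le> k - i" for d
    using that
  proof (induction d)
    case 0 then show ?case using step0 by simp
  next
    case (Suc d)
    define j where "j = k - d"
    have j: "i + 1 \<le> j" "j \<le> k" "k - Suc d = j - 1" "2 \<le> j" using Suc.prems i unfolding j_def by auto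
    have IH: "\<And>c. psum t j \<le> c \<Longrightarrow> c < n \<Longrightarrow> x $ c = 0" using Suc.IH Suc.prems unfolding j_def by auto
    have tj: "psum t j = psum t (j - 1) + t j" using psum_pred[of j t] j by simp
    have sj: "psum s (j - 1) = psum s (j - 2) + s (j - 1)" using psum_pred[of "j - 1" s] j
      by (simp add: numeral_2_eq_2)
    define B where "B = blk A s t (j - 1) j"
    have Bc: "B \<in> carrier_mat (s (j - 1)) (t j)" unfolding B_def by simp
    define xj where "xj = vec (t j) (\<lambda>c'. x $ (psum t (j - 1) + c'))"
    have xjc: "xj \<in> carrier_vec (t j)" unfolding xj_def by simp
    have "B *\<^sub>v xj = 0\<^sub>v (s (j - 1))"
    proof (rule eq_vecI)
      show "dim_vec (B *\<^sub>v xj) = dim_vec (0\<^sub>v (s (j - 1)))" using Bc by simp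
      fix r' assume "r' < dim_vec (0\<^sub>v (s (j - 1)))"
      then have r': "r' < s (j - 1)" by simp
      define row where "row = psum s (j - 2) + r'"
      have "psum s (j - 1) \<le> psum s k" by (rule psum_mono) (use j in simp)
      then have rowm: "row < m" using r' sj pm unfolding row_def by simp
      have "psum s (i - 1) \<le> psum s (j - 2)" by (rule psum_mono) (use j in simp)
      then have rowge: "psum s (i - 1) \<le> row" unfolding row_def by simp
      have "(B *\<^sub>v xj) $ r' = (\<Sum>c'\<in>{0..<t j}. A $$ (row, psum t (j - 1) + c') * x $ (psum t (j - 1) + c'))"
        using mulvec_index_sum[OF Bc xjc r'] r' blk_index[of r' s "j - 1" _ t j A]
        unfolding B_def xj_def row_def by (simp add: numeral_2_eq_2 Suc_diff_Suc)
      also have "\<dots> = (\<Sum>c\<in>{0..<n}. A $$ (row, c) * x $ c)"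
      proof (rule sum_window[symmetric])
        show "psum t (j - 1) + t j \<le> n" using tj psum_mono[of j k t] j qn by simp
        fix c assume c: "c < n" "\<not> (psum t (j - 1) \<le> c \<and> c < psum t (j - 1) + t j)"
        show "A $$ (row, c) * x $ c = 0"
        proof (cases "c < psum t (j - 1)")
          case True
          have "A $$ (row, c) = 0"
            by (rule LZ[of row c "j - 1"]) (use rowm True j in \<open>auto simp: row_def numeral_2_eq_2\<close>)
          then show ?thesis by simp
        next
          case False
          then show ?thesis using IH[of c] c tj by simp
        qed
      qed
      also have "\<dots> = (A *\<^sub>v x) $ row" using mulvec_index_sum[OF A x rowm] by simp
      also have "\<dots> = 0" using Axz[OF rowm rowge] .
      finally show "(B *\<^sub>v xj) $ r' = 0\<^sub>v (s (j - 1)) $ r'" using r' by simp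
    qed
    moreover have "full_col_rank B"
    proof -
      have "j - 1 \<in> {1..<k}" "j - 1 + 1 = j" using j by auto
      then show ?thesis using sup[of "j - 1"] unfolding B_def by simp
    qed
    ultimately have "xj = 0\<^sub>v (t j)" using full_col_rank_inj[OF Bc _ xjc] by blast
    then have xj0: "x $ (psum t (j - 1) + c') = 0" if "c' < t j" for c'
      using that unfolding xj_def by (metis index_vec index_zero_vec(1))
    show ?case
    proof (intro allI impI)
      fix c assume c: "psum t (k - Suc d) \<le> c" "c < n"
      show "x $ c = 0"
      proof (cases "psum t j \<le> c")
        case True then show ?thesis using IH c by simp
      next
        case False
        then show ?thesis using xj0[of "c - psum t (j - 1)"] c j tj by simp
      qed
    qed
  qed
  have "\<forall>c. psum t i \<le> c \<longrightarrow> c < n \<longrightarrow> x $ c = 0" using ind[of "k - i"] i by simp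
  then show ?thesis using x unfolding W_def by auto
qed



lemma imgE:
  assumes E: "E \<in> carrier_mat m n" and pm: "psum s k \<le> m" and qn: "psum t k \<le> n"
    and low: "sub_block E (psum s k) 0 (m - psum s k) (psum t k) = 0\<^sub>m (m - psum s k) (psum t k)"
    and tri: "\<And>i j. i \<in> {1..k} \<Longrightarrow> j \<in> {1..k} \<Longrightarrow> j < i \<Longrightarrow> blk E s t i j = 0\<^sub>m (s i) (t j)"
    and diag: "\<And>i. i \<in> {1..k} \<Longrightarrow> full_row_rank (blk E s t i i)"
    and jk: "j \<le> k"
  shows "(\<lambda>x. E *\<^sub>v x) ` W n (psum t j) = W m (psum s j)"
proof
  note LZ = lower_zero[OF pm qn low tri]
  have sub: "(\<lambda>x. E *\<^sub>v x) ` W n (psum t j') \<subseteq> W m (psum s j')" if "j' \<le> k" for j'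
    using mv_W[OF E, of "psum t j'" "psum s j'"] LZ[of _ _ j'] that by blast
  show "(\<lambda>x. E *\<^sub>v x) ` W n (psum t j) \<subseteq> W m (psum s j)" using sub[OF jk] .
  show "W m (psum s j) \<subseteq> (\<lambda>x. E *\<^sub>v x) ` W n (psum t j)"
    using jk
  proof (induction j)
    case 0
    have "E *\<^sub>v 0\<^sub>v n = 0\<^sub>v m" using E by (intro eq_vecI) (auto simp: scalar_prod_def)
    then show ?case by (simp add: W_0)
  next
    case (Suc j)
    show ?case
    proof
      fix y assume y: "y \<in> W m (psum s (Suc j))"
      have yc: "y \<in> carrier_vec m" using y unfolding W_def by auto
      define B where "B = blk E s t (Suc j) (Suc j)"
      have Bc: "B \<in> carrier_mat (s (Suc j)) (t (Suc j))" unfolding B_def by simp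
      define yb where "yb = vec (s (Suc j)) (\<lambda>r. y $ (psum s j + r))"
      have "full_row_rank B" using diag[of "Suc j"] Suc.prems unfolding B_def by simp
      then obtain z where z: "z \<in> carrier_vec (t (Suc j))" "B *\<^sub>v z = yb"
        using full_row_rank_surj[OF Bc] unfolding yb_def by (meson vec_carrier)
      define x' where "x' = vec n (\<lambda>c. if psum t j \<le> c \<and> c < psum t (Suc j) then z $ (c - psum t j) else 0)"
      have x'W: "x' \<in> W n (psum t (Suc j))" unfolding W_def x'_def by auto
      have Ex'W: "E *\<^sub>v x' \<in> W m (psum s (Suc j))" using sub[OF Suc.prems] x'W by blast
      have tSj: "psum t (Suc j) \<le> n" using psum_mono[OF Suc.prems, of t] qn by simp
      have sSj: "psum s (Suc j) \<le> m" using psum_mono[OF Suc.prems, of s] pm by simp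
      have Ex'b: "(E *\<^sub>v x') $ (psum s j + r') = y $ (psum s j + r')" if r': "r' < s (Suc j)" for r'
      proof -
        have rm: "psum s j + r' < m" using r' sSj psum_Suc[of s j] by simp
        have "(E *\<^sub>v x') $ (psum s j + r') = (\<Sum>c\<in>{0..<n}. E $$ (psum s j + r', c) * x' $ c)"
          using mulvec_index_sum[OF E _ rm] unfolding x'_def by simp
        also have "\<dots> = (\<Sum>c\<in>{0..<t (Suc j)}. E $$ (psum s j + r', psum t j + c) * x' $ (psum t j + c))"
          by (rule sum_window) (use tSj psum_Suc[of t j] in \<open>auto simp: x'_def\<close>)
        also have "\<dots> = (\<Sum>c\<in>{0..<t (Suc j)}. B $$ (r', c) * z $ c)"
          by (rule sum.cong) (use r' tSj psum_Suc[of t j] in \<open>auto simp: x'_def B_def blk_index\<close>)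
        also have "\<dots> = (B *\<^sub>v z) $ r'" using mulvec_index_sum[OF Bc z(1) r'] by simp
        also have "\<dots> = y $ (psum s j + r')" using z(2) r' unfolding yb_def by simp
        finally show ?thesis .
      qed
      define y2 where "y2 = y - E *\<^sub>v x'"
      have y2W: "y2 \<in> W m (psum s j)"
      proof -
        have "y2 $ r = 0" if r: "r < m" "psum s j \<le> r" for r
        proof (cases "r < psum s (Suc j)")
          case True
          then show ?thesis using Ex'b[of "r - psum s j"] r psum_Suc[of s j] yc E
            unfolding y2_def by simp
        next
          case False
          then show ?thesis using y Ex'W r yc E unfolding y2_def W_def by simp
        qed
        moreover have "y2 \<in> carrier_vec m" unfolding y2_def using yc E by (intro carrier_vecI) simp
        ultimately show ?thesis unfolding W_def by auto
      qed
      then obtain x'' where x'': "x'' \<in> W n (psum t j)" "E *\<^sub>v x'' = y2"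
        using Suc.IH Suc.prems by auto
      have x''W: "x'' \<in> W n (psum t (Suc j))"
        using x'' W_mono[of "psum t j" "psum t (Suc j)" n] psum_Suc[of t j] by auto
      define x where "x = x' + x''"
      have xW: "x \<in> W n (psum t (Suc j))" using x'W x''W unfolding W_def x_def by auto
      have x'c: "x' \<in> carrier_vec n" and x''c: "x'' \<in> carrier_vec n" using x'W x''W unfolding W_def by auto
      have "E *\<^sub>v x = E *\<^sub>v x' + E *\<^sub>v x''" unfolding x_def by (rule mult_add_distrib_mat_vec[OF E x'c x''c])
      also have "\<dots> = y" unfolding x''(2) y2_def using yc E by (intro eq_vecI) auto
      finally show "y \<in> (\<lambda>x. E *\<^sub>v x) ` W n (psum t (Suc j))" using xW by blast
    qed
  qed
qed

lemma preA:
  assumes A: "A \<in> carrier_mat m n" and pm: "psum s k \<le> m" and qn: "psum t k \<le> n"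
    and low: "sub_block A (psum s k) 0 (m - psum s k) (psum t k) = 0\<^sub>m (m - psum s k) (psum t k)"
    and tri: "\<And>i j. i \<in> {1..k} \<Longrightarrow> j \<in> {1..k} \<Longrightarrow> j < i \<Longrightarrow> blk A s t i j = 0\<^sub>m (s i) (t j)"
    and diag: "\<And>i. i \<in> {1..k} \<Longrightarrow> blk A s t i i = 0\<^sub>m (s i) (t i)"
    and i: "1 \<le> i" "i \<le> k" and x: "x \<in> W n (psum t i)"
  shows "A *\<^sub>v x \<in> W m (psum s (i - 1))"
  using mv_W[OF A, of "psum t i" "psum s (i - 1)"] lower_zero_diag[OF pm qn low tri diag, of _ _ i] i x
  by blast


lemma det_inv_exists:
  assumes A: "(A :: complex mat) \<in> carrier_mat p p" and d: "det A \<noteq> 0"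
  shows "\<exists>N \<in> carrier_mat p p. N * A = 1\<^sub>m p"
proof -
  have "A \<in> Units (ring_mat TYPE(complex) p undefined)" by (rule det_non_zero_imp_unit[OF A d])
  then show ?thesis unfolding Units_def ring_mat_def by auto
qed

lemma uut_sub_inv:
  assumes S: "S \<in> carrier_mat m m" and u: "unit_upper_triangular S" and p: "p \<le> m"
  shows "\<exists>N \<in> carrier_mat p p. N * sub_block S 0 0 p p = 1\<^sub>m p"
proof (rule det_inv_exists)
  show Sc: "sub_block S 0 0 p p \<in> carrier_mat p p" unfolding sub_block_def by simp
  have ut: "upper_triangular (sub_block S 0 0 p p)"
    using u p S unfolding unit_upper_triangular_def upper_triangular_def sub_block_def by auto
  have "diag_mat (sub_block S 0 0 p p) = replicate p 1"
    using u p S unfolding unit_upper_triangular_def sub_block_def diag_mat_def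
    by (auto intro!: nth_equalityI)
  then show "det (sub_block S 0 0 p p) \<noteq> 0"
    using det_upper_triangular[OF ut Sc] by simp
qed


lemma unitary_surj:
  assumes M: "M \<in> carrier_mat d d" and MM: "mat_adjoint M * M = 1\<^sub>m d" and pd: "p \<le> d"
    and Z: "\<And>r c. r < d \<Longrightarrow> c < p \<Longrightarrow> p \<le> r \<Longrightarrow> M $$ (r, c) = 0"
  shows "(\<lambda>x. M *\<^sub>v x) ` W d p = W d p"
proof (rule sq_surj[OF M pd Z])
  define H where "H = mat_adjoint M"
  have H: "H \<in> carrier_mat d d" unfolding H_def using adjoint_carrier[OF M] .
  show "sub_block H 0 0 p p \<in> carrier_mat p p" unfolding sub_block_def by simp
  show "sub_block H 0 0 p p * sub_block M 0 0 p p = 1\<^sub>m p"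
  proof (rule eq_matI)
    fix a b assume ab: "a < dim_row (1\<^sub>m p :: complex mat)" "b < dim_col (1\<^sub>m p :: complex mat)"
    then have a: "a < p" and b: "b < p" by auto
    have "(sub_block H 0 0 p p * sub_block M 0 0 p p) $$ (a, b) = (\<Sum>l\<in>{0..<p}. H $$ (a, l) * M $$ (l, b))"
      using a b by (simp add: sub_block_def scalar_prod_def)
    also have "\<dots> = (\<Sum>l\<in>{0..<d}. H $$ (a, l) * M $$ (l, b))"
      using sum_window[of 0 p d "\<lambda>l. H $$ (a, l) * M $$ (l, b)"] pd Z b by auto
    also have "\<dots> = (H * M) $$ (a, b)" using a b pd H M by (simp add: scalar_prod_def)
    also have "\<dots> = 1\<^sub>m p $$ (a, b)" using MM a b pd unfolding H_def by simp
    finally show "(sub_block H 0 0 p p * sub_block M 0 0 p p) $$ (a, b) = 1\<^sub>m p $$ (a, b)" .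
  qed (auto simp: sub_block_def)
qed



lemma mv3:
  assumes "P \<in> carrier_mat a b" "Q \<in> carrier_mat b c" "R \<in> carrier_mat c d" "x \<in> carrier_vec d"
  shows "(P * Q * R) *\<^sub>v x = P *\<^sub>v (Q *\<^sub>v (R *\<^sub>v x))"
proof -
  have "(P * Q * R) *\<^sub>v x = (P * Q) *\<^sub>v (R *\<^sub>v x)"
    by (rule assoc_mult_mat_vec) (use assms in auto)
  also have "\<dots> = P *\<^sub>v (Q *\<^sub>v (R *\<^sub>v x))"
    by (rule assoc_mult_mat_vec) (use assms in \<open>auto intro: carrier_vecI\<close>)
  finally show ?thesis .
qed

theorem corollary4p2:
  fixes L0 L1 U V Ud Vd S T B0 B1 :: "complex mat"
    and m n k :: nat and s t :: "nat \<Rightarrow> nat"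
  assumes L0: "L0 \<in> carrier_mat m n" and L1: "L1 \<in> carrier_mat m n"
    and U: "unitary_mat U m" and V: "unitary_mat V n"
    and pm: "psum s k \<le> m" and qn: "psum t k \<le> n"
    (* lower-left blocks zero *)
    and low0: "sub_block (mat_adjoint U * L0 * V) (psum s k) 0 (m - psum s k) (psum t k)
                 = 0\<^sub>m (m - psum s k) (psum t k)"
    and low1: "sub_block (mat_adjoint U * L1 * V) (psum s k) 0 (m - psum s k) (psum t k)
                 = 0\<^sub>m (m - psum s k) (psum t k)"
    (* A_r full column rank *)
    and Ar: "full_col_rank (sub_block (mat_adjoint U * L0 * V) (psum s k) (psum t k)
                (m - psum s k) (n - psum t k))"
    (* leading subpencil block upper triangular *)
    and triA: "\<And>i j. i \<in> {1..k} \<Longrightarrow> j \<in> {1..k} \<Longrightarrow> j < i \<Longrightarrow>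
                 blk (mat_adjoint U * L0 * V) s t i j = 0\<^sub>m (s i) (t j)"
    and triE: "\<And>i j. i \<in> {1..k} \<Longrightarrow> j \<in> {1..k} \<Longrightarrow> j < i \<Longrightarrow>
                 blk (mat_adjoint U * L1 * V) s t i j = 0\<^sub>m (s i) (t j)"
    and diagA: "\<And>i. i \<in> {1..k} \<Longrightarrow> blk (mat_adjoint U * L0 * V) s t i i = 0\<^sub>m (s i) (t i)"
    and diagE: "\<And>i. i \<in> {1..k} \<Longrightarrow> full_row_rank (blk (mat_adjoint U * L1 * V) s t i i)"
    and superA: "\<And>i. i \<in> {1..<k} \<Longrightarrow>
                   full_col_rank (blk (mat_adjoint U * L0 * V) s t i (i + 1))"
    (* U_d, V_d: unitary, block diagonal conformal with the blocks, identity outside *)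
    and Ud: "unitary_mat Ud m"
    and Ud_bd: "\<And>i j. i \<in> {1..k} \<Longrightarrow> j \<in> {1..k} \<Longrightarrow> i \<noteq> j \<Longrightarrow>
                  blk Ud s s i j = 0\<^sub>m (s i) (s j)"
    and Ud_ur: "sub_block Ud 0 (psum s k) (psum s k) (m - psum s k) = 0\<^sub>m (psum s k) (m - psum s k)"
    and Ud_ll: "sub_block Ud (psum s k) 0 (m - psum s k) (psum s k) = 0\<^sub>m (m - psum s k) (psum s k)"
    and Ud_lr: "sub_block Ud (psum s k) (psum s k) (m - psum s k) (m - psum s k) = 1\<^sub>m (m - psum s k)"
    and Vd: "unitary_mat Vd n"
    and Vd_bd: "\<And>i j. i \<in> {1..k} \<Longrightarrow> j \<in> {1..k} \<Longrightarrow> i \<noteq> j \<Longrightarrow>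
                  blk Vd t t i j = 0\<^sub>m (t i) (t j)"
    and Vd_ur: "sub_block Vd 0 (psum t k) (psum t k) (n - psum t k) = 0\<^sub>m (psum t k) (n - psum t k)"
    and Vd_ll: "sub_block Vd (psum t k) 0 (n - psum t k) (psum t k) = 0\<^sub>m (n - psum t k) (psum t k)"
    and Vd_lr: "sub_block Vd (psum t k) (psum t k) (n - psum t k) (n - psum t k) = 1\<^sub>m (n - psum t k)"
    (* staircase form w.r.t. U Ud, V Vd:  A_{i,i+1} = [Ahat; 0],  E_{i,i} = [0  Ehat] *)
    and stA: "\<And>i. i \<in> {1..<k} \<Longrightarrow> t (i + 1) \<le> s i
       \<and> sub_block (blk (mat_adjoint (U * Ud) * L0 * (V * Vd)) s t i (i + 1))
            (t (i + 1)) 0 (s i - t (i + 1)) (t (i + 1)) = 0\<^sub>m (s i - t (i + 1)) (t (i + 1))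
       \<and> upper_triangular (sub_block (blk (mat_adjoint (U * Ud) * L0 * (V * Vd)) s t i (i + 1))
            0 0 (t (i + 1)) (t (i + 1)))
       \<and> invertible_mat (sub_block (blk (mat_adjoint (U * Ud) * L0 * (V * Vd)) s t i (i + 1))
            0 0 (t (i + 1)) (t (i + 1)))"
    and stE: "\<And>i. i \<in> {1..k} \<Longrightarrow> s i \<le> t i
       \<and> sub_block (blk (mat_adjoint (U * Ud) * L1 * (V * Vd)) s t i i)
            0 0 (s i) (t i - s i) = 0\<^sub>m (s i) (t i - s i)
       \<and> upper_triangular (sub_block (blk (mat_adjoint (U * Ud) * L1 * (V * Vd)) s t i i)
            0 (t i - s i) (s i) (s i))
       \<and> invertible_mat (sub_block (blk (mat_adjoint (U * Ud) * L1 * (V * Vd)) s t i i)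
            0 (t i - s i) (s i) (s i))"
    (* S, T: unit upper triangular, identity outside the leading part *)
    and S: "S \<in> carrier_mat m m" and S_uut: "unit_upper_triangular S"
    and S_ur: "sub_block S 0 (psum s k) (psum s k) (m - psum s k) = 0\<^sub>m (psum s k) (m - psum s k)"
    and S_lr: "sub_block S (psum s k) (psum s k) (m - psum s k) (m - psum s k) = 1\<^sub>m (m - psum s k)"
    and T: "T \<in> carrier_mat n n" and T_uut: "unit_upper_triangular T"
    and T_ur: "sub_block T 0 (psum t k) (psum t k) (n - psum t k) = 0\<^sub>m (psum t k) (n - psum t k)"
    and T_lr: "sub_block T (psum t k) (psum t k) (n - psum t k) (n - psum t k) = 1\<^sub>m (n - psum t k)"
    (* B0 + lambda B1 = S^{-1} (U Ud)^* (L0 + lambda L1) (V Vd) T is bidiagonal in the leading part *)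
    and B0: "B0 \<in> carrier_mat m n" and B1: "B1 \<in> carrier_mat m n"
    and B0_eq: "mat_adjoint (U * Ud) * L0 * (V * Vd) * T = S * B0"
    and B1_eq: "mat_adjoint (U * Ud) * L1 * (V * Vd) * T = S * B1"
    and B0_bidiag: "\<And>i j. i \<in> {1..k} \<Longrightarrow> j \<in> {1..k} \<Longrightarrow> j \<noteq> i + 1 \<Longrightarrow>
                      blk B0 s t i j = 0\<^sub>m (s i) (t j)"
    and B1_bidiag: "\<And>i j. i \<in> {1..k} \<Longrightarrow> j \<in> {1..k} \<Longrightarrow> j \<noteq> i \<Longrightarrow>
                      blk B1 s t i j = 0\<^sub>m (s i) (t j)"
  shows "\<forall>i \<in> {1..k}.
           wongU L0 L1 i = col_image (lead_cols (U * Ud * S) (psum s i))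
         \<and> wongV L0 L1 i = col_image (lead_cols (V * Vd * T) (psum t i))"
proof -
  have Uc: "U \<in> carrier_mat m m" and UU: "mat_adjoint U * U = 1\<^sub>m m" using U unfolding unitary_mat_def by auto
  have Vc: "V \<in> carrier_mat n n" and VV: "mat_adjoint V * V = 1\<^sub>m n" using V unfolding unitary_mat_def by auto
  have UH: "mat_adjoint U \<in> carrier_mat m m" using adjoint_carrier[OF Uc] .
  have VH: "mat_adjoint V \<in> carrier_mat n n" using adjoint_carrier[OF Vc] .
  have UU': "U * mat_adjoint U = 1\<^sub>m m" using unitary_right[OF U] .
  have VV': "V * mat_adjoint V = 1\<^sub>m n" using unitary_right[OF V] .
  define A where "A = mat_adjoint U * L0 * V"
  define E where "E = mat_adjoint U * L1 * V"
  have Ac: "A \<in> carrier_mat m n" unfolding A_def using UH L0 Vc by auto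
  have Ec: "E \<in> carrier_mat m n" unfolding E_def using UH L1 Vc by auto
  have U1: "U *\<^sub>v (mat_adjoint U *\<^sub>v w) = w" if "w \<in> carrier_vec m" for w
    using that Uc UH UU' by (simp add: assoc_mult_mat_vec[symmetric])
  have U2: "mat_adjoint U *\<^sub>v (U *\<^sub>v w) = w" if "w \<in> carrier_vec m" for w
    using that Uc UH UU by (simp add: assoc_mult_mat_vec[symmetric])
  have V1: "V *\<^sub>v (mat_adjoint V *\<^sub>v w) = w" if "w \<in> carrier_vec n" for w
    using that Vc VH VV' by (simp add: assoc_mult_mat_vec[symmetric])
  have V2: "mat_adjoint V *\<^sub>v (V *\<^sub>v w) = w" if "w \<in> carrier_vec n" for w
    using that Vc VH VV by (simp add: assoc_mult_mat_vec[symmetric])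
  have A_eq: "A *\<^sub>v (mat_adjoint V *\<^sub>v v) = mat_adjoint U *\<^sub>v (L0 *\<^sub>v v)" if v: "v \<in> carrier_vec n" for v
  proof -
    have "A *\<^sub>v (mat_adjoint V *\<^sub>v v) = mat_adjoint U *\<^sub>v (L0 *\<^sub>v (V *\<^sub>v (mat_adjoint V *\<^sub>v v)))"
      unfolding A_def by (rule mv3[OF UH L0 Vc]) (use VH v in \<open>auto intro: carrier_vecI\<close>)
    then show ?thesis using V1[OF v] by simp
  qed
  have E_eq: "U *\<^sub>v (E *\<^sub>v (mat_adjoint V *\<^sub>v v)) = L1 *\<^sub>v v" if v: "v \<in> carrier_vec n" for v
  proof -
    have "E *\<^sub>v (mat_adjoint V *\<^sub>v v) = mat_adjoint U *\<^sub>v (L1 *\<^sub>v (V *\<^sub>v (mat_adjoint V *\<^sub>v v)))"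
      unfolding E_def by (rule mv3[OF UH L1 Vc]) (use VH v in \<open>auto intro: carrier_vecI\<close>)
    moreover have "L1 *\<^sub>v v \<in> carrier_vec m" using L1 by (intro carrier_vecI) simp
    ultimately show ?thesis using V1[OF v] U1[of "L1 *\<^sub>v v"] by simp
  qed
  have inUW: "w \<in> (\<lambda>x. U *\<^sub>v x) ` W m p \<longleftrightarrow> mat_adjoint U *\<^sub>v w \<in> W m p" if w: "w \<in> carrier_vec m" for w p
  proof
    assume "w \<in> (\<lambda>x. U *\<^sub>v x) ` W m p"
    then obtain z where z: "z \<in> W m p" "w = U *\<^sub>v z" by auto
    then show "mat_adjoint U *\<^sub>v w \<in> W m p" using U2[of z] unfolding W_def by auto
  next
    assume "mat_adjoint U *\<^sub>v w \<in> W m p"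
    then show "w \<in> (\<lambda>x. U *\<^sub>v x) ` W m p" using U1[OF w] by (metis image_eqI)
  qed
  have ker: "A *\<^sub>v x \<in> W m (psum s (i - 1)) \<longleftrightarrow> x \<in> W n (psum t i)"
    if "x \<in> carrier_vec n" "1 \<le> i" "i \<le> k" for x i
    using kerA[OF Ac[unfolded A_def] pm qn low0 Ar triA diagA superA, of i x] preA[OF Ac[unfolded A_def] pm qn low0 triA diagA, of i x] that
    unfolding A_def by blast
  have Vcond: "L0 *\<^sub>v v \<in> (\<lambda>x. U *\<^sub>v x) ` W m (psum s (i - 1)) \<longleftrightarrow> mat_adjoint V *\<^sub>v v \<in> W n (psum t i)"
    if v: "v \<in> carrier_vec n" and i: "1 \<le> i" "i \<le> k" for v i
  proof -
    have "L0 *\<^sub>v v \<in> carrier_vec m" using L0 by (intro carrier_vecI) simp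
    then have "L0 *\<^sub>v v \<in> (\<lambda>x. U *\<^sub>v x) ` W m (psum s (i - 1)) \<longleftrightarrow> A *\<^sub>v (mat_adjoint V *\<^sub>v v) \<in> W m (psum s (i - 1))"
      using inUW A_eq[OF v] by simp
    also have "\<dots> \<longleftrightarrow> mat_adjoint V *\<^sub>v v \<in> W n (psum t i)"
      by (rule ker) (use VH i in \<open>auto intro: carrier_vecI\<close>)
    finally show ?thesis .
  qed
  have imE: "(\<lambda>x. E *\<^sub>v x) ` W n (psum t j) = W m (psum s j)" if "j \<le> k" for j
    using imgE[OF Ec[unfolded E_def] pm qn low1 triE diagE that] unfolding E_def .
  have wU: "wongU L0 L1 i = (\<lambda>x. U *\<^sub>v x) ` W m (psum s i)" if "i \<le> k" for i
    using that
  proof (induction i)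
    case 0
    have "U *\<^sub>v 0\<^sub>v m = 0\<^sub>v m" using Uc by (intro eq_vecI) (auto simp: scalar_prod_def)
    then show ?case using L0 by (simp add: W_0)
  next
    case (Suc i)
    have IH: "wongU L0 L1 i = (\<lambda>x. U *\<^sub>v x) ` W m (psum s i)" using Suc by simp
    have cond: "L0 *\<^sub>v v \<in> wongU L0 L1 i \<longleftrightarrow> mat_adjoint V *\<^sub>v v \<in> W n (psum t (Suc i))"
      if "v \<in> carrier_vec n" for v
      using Vcond[OF that, of "Suc i"] Suc.prems IH by simp
    show ?case
    proof
      show "wongU L0 L1 (Suc i) \<subseteq> (\<lambda>x. U *\<^sub>v x) ` W m (psum s (Suc i))"
      proof
        fix y assume "y \<in> wongU L0 L1 (Suc i)"
        then obtain v where v: "v \<in> carrier_vec n" "L0 *\<^sub>v v \<in> wongU L0 L1 i" "y = L1 *\<^sub>v v"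
          using L0 by auto
        have "mat_adjoint V *\<^sub>v v \<in> W n (psum t (Suc i))" using cond v by blast
        then have "E *\<^sub>v (mat_adjoint V *\<^sub>v v) \<in> W m (psum s (Suc i))" using imE[OF Suc.prems] by blast
        then show "y \<in> (\<lambda>x. U *\<^sub>v x) ` W m (psum s (Suc i))" using E_eq[OF v(1)] v(3) by (metis image_eqI)
      qed
      show "(\<lambda>x. U *\<^sub>v x) ` W m (psum s (Suc i)) \<subseteq> wongU L0 L1 (Suc i)"
      proof
        fix y assume "y \<in> (\<lambda>x. U *\<^sub>v x) ` W m (psum s (Suc i))"
        then obtain z where z: "z \<in> W m (psum s (Suc i))" "y = U *\<^sub>v z" by auto
        then obtain x where x: "x \<in> W n (psum t (Suc i))" "z = E *\<^sub>v x" using imE[OF Suc.prems] by blast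
        have xc: "x \<in> carrier_vec n" using x unfolding W_def by auto
        define v where "v = V *\<^sub>v x"
        have vc: "v \<in> carrier_vec n" unfolding v_def using Vc by (intro carrier_vecI) simp
        have Hv: "mat_adjoint V *\<^sub>v v = x" unfolding v_def using V2[OF xc] .
        have "L0 *\<^sub>v v \<in> wongU L0 L1 i" using cond[OF vc] Hv x by simp
        moreover have "y = L1 *\<^sub>v v" using E_eq[OF vc] Hv z x by simp
        ultimately show "y \<in> wongU L0 L1 (Suc i)" using vc L0 by auto
      qed
    qed
  qed
  have SW: "(\<lambda>x. S *\<^sub>v x) ` W m p = W m p" if pp: "p \<le> m" for p
  proof -
    obtain N where "N \<in> carrier_mat p p" "N * sub_block S 0 0 p p = 1\<^sub>m p" using uut_sub_inv[OF S S_uut pp] by blast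
    moreover have "S $$ (r, c) = 0" if "r < m" "c < p" "p \<le> r" for r c
      using S_uut S that unfolding unit_upper_triangular_def upper_triangular_def by auto
    ultimately show ?thesis using sq_surj[OF S pp] by blast
  qed
  have TW: "(\<lambda>x. T *\<^sub>v x) ` W n p = W n p" if pp: "p \<le> n" for p
  proof -
    obtain N where "N \<in> carrier_mat p p" "N * sub_block T 0 0 p p = 1\<^sub>m p" using uut_sub_inv[OF T T_uut pp] by blast
    moreover have "T $$ (r, c) = 0" if "r < n" "c < p" "p \<le> r" for r c
      using T_uut T that unfolding unit_upper_triangular_def upper_triangular_def by auto
    ultimately show ?thesis using sq_surj[OF T pp] by blast
  qed
  have Udc: "Ud \<in> carrier_mat m m" "mat_adjoint Ud * Ud = 1\<^sub>m m" using Ud unfolding unitary_mat_def by auto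
  have Vdc: "Vd \<in> carrier_mat n n" "mat_adjoint Vd * Vd = 1\<^sub>m n" using Vd unfolding unitary_mat_def by auto
  have UdW: "(\<lambda>x. Ud *\<^sub>v x) ` W m (psum s i) = W m (psum s i)" if that: "i \<le> k" for i
  proof (rule unitary_surj[OF Udc])
    show "psum s i \<le> m" using psum_mono[OF that, of s] pm by simp
    fix r c assume "r < m" "c < psum s i" "psum s i \<le> r"
    moreover have triU: "\<And>i j. i \<in> {1..k} \<Longrightarrow> j \<in> {1..k} \<Longrightarrow> j < i \<Longrightarrow> blk Ud s s i j = 0\<^sub>m (s i) (s j)"
      using Ud_bd by simp
    ultimately show "Ud $$ (r, c) = 0"
      using lower_zero[OF pm pm Ud_ll triU] that by blast
  qed
  have VdW: "(\<lambda>x. Vd *\<^sub>v x) ` W n (psum t i) = W n (psum t i)" if "i \<le> k" for i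
  proof (rule unitary_surj[OF Vdc])
    show "psum t i \<le> n" using psum_mono[OF that, of t] qn by simp
    fix r c assume "r < n" "c < psum t i" "psum t i \<le> r"
    moreover have triV: "\<And>i j. i \<in> {1..k} \<Longrightarrow> j \<in> {1..k} \<Longrightarrow> j < i \<Longrightarrow> blk Vd t t i j = 0\<^sub>m (t i) (t j)"
      using Vd_bd by simp
    ultimately show "Vd $$ (r, c) = 0"
      using lower_zero[OF qn qn Vd_ll triV] that by blast
  qed
  have comp3: "(\<lambda>x. (P * Q * R) *\<^sub>v x) ` X = (\<lambda>x. P *\<^sub>v x) ` ((\<lambda>x. Q *\<^sub>v x) ` ((\<lambda>x. R *\<^sub>v x) ` X))"
    if "P \<in> carrier_mat d d" "Q \<in> carrier_mat d d" "R \<in> carrier_mat d d" "X \<subseteq> carrier_vec d" for P Q R X d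
  proof -
    have "(P * Q * R) *\<^sub>v x = P *\<^sub>v (Q *\<^sub>v (R *\<^sub>v x))" if "x \<in> X" for x
      using mv3[OF \<open>P \<in> carrier_mat d d\<close> \<open>Q \<in> carrier_mat d d\<close> \<open>R \<in> carrier_mat d d\<close>] that \<open>X \<subseteq> carrier_vec d\<close> by auto
    then show ?thesis by (auto simp: image_image cong: image_cong)
  qed
  show ?thesis
  proof (intro ballI conjI)
    fix i assume i: "i \<in> {1..k}"
    have sm: "psum s i \<le> m" using psum_mono[of i k s] i pm by simp
    have tn: "psum t i \<le> n" using psum_mono[of i k t] i qn by simp
    have "col_image (lead_cols (U * Ud * S) (psum s i)) = (\<lambda>x. (U * Ud * S) *\<^sub>v x) ` W m (psum s i)"
      by (rule col_image_lead[OF _ sm]) (use Uc Udc S in auto)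
    also have "\<dots> = (\<lambda>x. U *\<^sub>v x) ` W m (psum s i)"
      using comp3[OF Uc Udc(1) S, of "W m (psum s i)"] SW[OF sm] UdW[of i] i unfolding W_def by auto
    also have "\<dots> = wongU L0 L1 i" using wU[of i] i by simp
    finally show "wongU L0 L1 i = col_image (lead_cols (U * Ud * S) (psum s i))" by simp
    have "col_image (lead_cols (V * Vd * T) (psum t i)) = (\<lambda>x. (V * Vd * T) *\<^sub>v x) ` W n (psum t i)"
      by (rule col_image_lead[OF _ tn]) (use Vc Vdc T in auto)
    also have "\<dots> = (\<lambda>x. V *\<^sub>v x) ` W n (psum t i)"
      using comp3[OF Vc Vdc(1) T, of "W n (psum t i)"] TW[OF tn] VdW[of i] i unfolding W_def by auto
    also have "\<dots> = wongV L0 L1 i"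
    proof
      show "(\<lambda>x. V *\<^sub>v x) ` W n (psum t i) \<subseteq> wongV L0 L1 i"
      proof
        fix v assume "v \<in> (\<lambda>x. V *\<^sub>v x) ` W n (psum t i)"
        then obtain x where x: "x \<in> W n (psum t i)" "v = V *\<^sub>v x" by auto
        have xc: "x \<in> carrier_vec n" using x unfolding W_def by auto
        have vc: "v \<in> carrier_vec n" using x(2) Vc by (intro carrier_vecI) simp
        have "mat_adjoint V *\<^sub>v v = x" using V2[OF xc] x(2) by simp
        then have "L0 *\<^sub>v v \<in> (\<lambda>x. U *\<^sub>v x) ` W m (psum s (i - 1))" using Vcond[OF vc, of i] i x by auto
        then show "v \<in> wongV L0 L1 i" unfolding wongV_def using wU[of "i - 1"] i vc L0 by auto
      qed
      show "wongV L0 L1 i \<subseteq> (\<lambda>x. V *\<^sub>v x) ` W n (psum t i)"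
      proof
        fix v assume "v \<in> wongV L0 L1 i"
        then have vc: "v \<in> carrier_vec n" and "L0 *\<^sub>v v \<in> (\<lambda>x. U *\<^sub>v x) ` W m (psum s (i - 1))"
          unfolding wongV_def using wU[of "i - 1"] i L0 by auto
        then have "mat_adjoint V *\<^sub>v v \<in> W n (psum t i)" using Vcond[OF vc, of i] i by auto
        then show "v \<in> (\<lambda>x. V *\<^sub>v x) ` W n (psum t i)" using V1[OF vc] by (metis image_eqI)
      qed
    qed
    finally show "wongV L0 L1 i = col_image (lead_cols (V * Vd * T) (psum t i))" by simp
  qed
qed

end
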